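(* Let $r\ge1$ and let $D_r$ be the $r\times(2r-1)$ matrix with rows indexed by $1,\dots,r$ and columns indexed by $0,1,\dots,2r-2$, whose $(k,c)$ entry is $1$ if $c=r-k$ or $c=r-2+k$, and $0$ otherwise (so row $1$ has a single $1$ in column $r-1$, and row $k\ge2$ has $1$'s in columns $r-k$ and $r-2+k$). For a partition $\lambda$ with $l(\lambda)\le r$ and $\lambda_1\le r-1$, let $I(\lambda)=\{\lambda_r,\lambda_{r-1}+1,\dots,\lambda_1+r-1\}\subseteq\{0,\dots,2r-2\}$ and let $\Delta_{I(\lambda)}(D_r)$ be the $r\times r$ submatrix of $D_r$ consisting of the columns indexed by $I(\lambda)$ (in increasing order). Then $$\det\Delta_{I(\lambda)}(D_r)=\begin{cases}(-1)^{r(r-1)/2+|\lambda|/2}&\text{if }\lambda\in\mathcal P_r,\\ 0&\text{otherwise.}\end{cases}$$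
   Context: Partitions: a partition $\lambda=(\lambda_1\ge\lambda_2\ge\cdots)$ of nonnegative integers with finitely many nonzero parts; $l(\lambda)$ is the number of nonzero parts, $|\lambda|=\sum_i\lambda_i$. In Frobenius notation $\lambda=(\alpha_1,\dots,\alpha_d\,|\,\beta_1,\dots,\beta_d)$ where $d=\#\{i:\lambda_i\ge i\}$, $\alpha_i=\lambda_i-i$, $\beta_i=\lambda'_i-i$ ($\lambda'$ the conjugate partition). For an integer $m\ge 0$, $\mathcal{P}_m$ is the set of partitions $\lambda$ with $l(\lambda)\le m$ of the form $(\alpha_1,\dots,\alpha_d\,|\,\alpha_1+1,\dots,\alpha_d+1)$ (the empty partition included; $|\lambda|$ is then even). *)

theory Defs
  imports "Jordan_Normal_Form.Determinant"
begin

text \<open>A partition is represented as a function lam :: nat => nat, read 1-indexed: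
  lam i is the i-th part (i >= 1); the value lam 0 is never used.\<close>

definition is_partition :: "(nat \<Rightarrow> nat) \<Rightarrow> bool" where
  "is_partition lam \<longleftrightarrow> (\<forall>i\<ge>1. lam (Suc i) \<le> lam i) \<and> finite {i. 1 \<le> i \<and> lam i \<noteq> 0}"

definition part_length :: "(nat \<Rightarrow> nat) \<Rightarrow> nat" where
  "part_length lam = card {i. 1 \<le> i \<and> lam i \<noteq> 0}"

definition part_size :: "(nat \<Rightarrow> nat) \<Rightarrow> nat" where
  "part_size lam = (\<Sum>i\<in>{i. 1 \<le> i \<and> lam i \<noteq> 0}. lam i)"

definition conj_part :: "(nat \<Rightarrow> nat) \<Rightarrow> nat \<Rightarrow> nat" where
  "conj_part lam j = card {i. 1 \<le> i \<and> j \<le> lam i}"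

definition frob_rank :: "(nat \<Rightarrow> nat) \<Rightarrow> nat" where
  "frob_rank lam = card {i. 1 \<le> i \<and> i \<le> lam i}"

definition frob_alpha :: "(nat \<Rightarrow> nat) \<Rightarrow> nat \<Rightarrow> int" where
  "frob_alpha lam i = int (lam i) - int i"

definition frob_beta :: "(nat \<Rightarrow> nat) \<Rightarrow> nat \<Rightarrow> int" where
  "frob_beta lam i = int (conj_part lam i) - int i"

definition in_P :: "nat \<Rightarrow> (nat \<Rightarrow> nat) \<Rightarrow> bool" where
  "in_P m lam \<longleftrightarrow> is_partition lam \<and> part_length lam \<le> m \<and>
     (\<forall>i. 1 \<le> i \<and> i \<le> frob_rank lam \<longrightarrow> frob_beta lam i = frob_alpha lam i + 1)"

text \<open>The r x (2r-1) matrix D_r, with 0-based row index i (= k-1, k = 1..r) and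
  0-based column index c in 0..2r-2: entry 1 iff c = r-k or c = r-2+k.\<close>
definition D_mat :: "nat \<Rightarrow> int mat" where
  "D_mat r = mat r (2*r - 1) (\<lambda>(i, c). let k = i + 1 in
      if c = r - k \<or> c = r + k - 2 then 1 else 0)"

definition I_idx :: "nat \<Rightarrow> (nat \<Rightarrow> nat) \<Rightarrow> nat \<Rightarrow> nat" where
  "I_idx r lam j = lam (r - j) + j"

definition Delta_I :: "nat \<Rightarrow> (nat \<Rightarrow> nat) \<Rightarrow> int mat" where
  "Delta_I r lam = mat r r (\<lambda>(i, j). D_mat r $$ (i, I_idx r lam j))"

end

theory Submission
  imports Defs
begin



definition pmat :: "nat \<Rightarrow> (nat \<Rightarrow> int) \<Rightarrow> int mat" where
  "pmat n x = mat n n (\<lambda>(i,j). if int i = \<bar>x j\<bar> then 1 else 0)"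

lemma sum_single:
  fixes f :: "nat \<Rightarrow> int"
  assumes "j0 < n" "\<And>j. j < n \<Longrightarrow> j \<noteq> j0 \<Longrightarrow> f j = 0"
  shows "(\<Sum>j<n. f j) = f j0"
proof -
  have "(\<Sum>j<n. f j) = (\<Sum>j<n. if j = j0 then f j0 else 0)"
    by (rule sum.cong, auto simp: assms)
  also have "\<dots> = f j0" using assms(1) by simp
  finally show ?thesis .
qed

lemma L1:
  "(\<forall>j k. j < k \<longrightarrow> k < n \<longrightarrow> x j < x k) \<Longrightarrow> (\<forall>j<n. \<bar>x j\<bar> < int n) \<Longrightarrow>
   inj_on (\<lambda>j. \<bar>x j\<bar>) {0..<n} \<Longrightarrow>
   det (pmat n x) = (-1) ^ (\<Sum>j<n. nat (- x j))"
proof (induction n arbitrary: x)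
  case 0
  then show ?case by (simp add: pmat_def)
next
  case (Suc n)
  note mono = Suc.prems(1) and bnd = Suc.prems(2) and inj = Suc.prems(3)
  have img: "(\<lambda>j. \<bar>x j\<bar>) ` {0..<Suc n} = int ` {0..<Suc n}"
  proof -
    have sub: "(\<lambda>j. \<bar>x j\<bar>) ` {0..<Suc n} \<subseteq> int ` {0..<Suc n}"
    proof
      fix v assume "v \<in> (\<lambda>j. \<bar>x j\<bar>) ` {0..<Suc n}"
      then obtain j where j: "j < Suc n" "v = \<bar>x j\<bar>" by auto
      then have "v = int (nat v)" "nat v < Suc n" using bnd by auto
      then show "v \<in> int ` {0..<Suc n}" by (metis atLeastLessThan_iff image_eqI zero_le)
    qed
    moreover have "card ((\<lambda>j. \<bar>x j\<bar>) ` {0..<Suc n}) = card (int ` {0..<Suc n})"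
      using card_image[OF inj] by (simp add: card_image)
    ultimately show ?thesis by (intro card_subset_eq) auto
  qed
  have "int n \<in> (\<lambda>j. \<bar>x j\<bar>) ` {0..<Suc n}" unfolding img by auto
  then obtain js where js: "js < Suc n" "\<bar>x js\<bar> = int n" by auto
  define A where "A = pmat (Suc n) x"
  have A: "A \<in> carrier_mat (Suc n) (Suc n)" by (simp add: A_def pmat_def)
  have row: "A $$ (n, j) = (if j = js then 1 else 0)" if "j < Suc n" for j
  proof -
    have "\<bar>x j\<bar> = int n \<longleftrightarrow> j = js"
      using inj js that unfolding inj_on_def by auto
    then show ?thesis using that js by (auto simp: A_def pmat_def)
  qed
  have lap: "det A = cofactor A n js"
    using laplace_expansion_row[OF A, of n] sum_single[of js "Suc n" "\<lambda>j. A $$ (n, j) * cofactor A n j"]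
      row js by simp
  show ?case
  proof (cases "x js = int n")
    case True
    have jsn: "js = n"
    proof (rule ccontr)
      assume "js \<noteq> n" then have "js < n" using js by simp
      then have "x js < x n" using mono by auto
      then show False using bnd True by fastforce
    qed
    have del: "mat_delete A n n = pmat n x"
      unfolding A_def pmat_def mat_delete_def by (rule eq_matI) auto
    have IH: "det (pmat n x) = (-1) ^ (\<Sum>j<n. nat (- x j))"
    proof (rule Suc.IH)
      show "\<forall>j k. j < k \<longrightarrow> k < n \<longrightarrow> x j < x k" using mono by auto
      show "\<forall>j<n. \<bar>x j\<bar> < int n"
      proof (intro allI impI)
        fix j assume "j < n"
        then have "\<bar>x j\<bar> \<noteq> int n" using inj_onD[OF inj, of j js] js jsn by auto
        moreover have "\<bar>x j\<bar> < int (Suc n)" using bnd \<open>j < n\<close> by simp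
        ultimately show "\<bar>x j\<bar> < int n" by linarith
      qed
      show "inj_on (\<lambda>j. \<bar>x j\<bar>) {0..<n}" using inj by (rule inj_on_subset) auto
    qed
    have "det A = det (pmat n x)" using lap jsn del by (simp add: cofactor_def)
    then show ?thesis using IH True jsn by (simp add: A_def)
  next
    case False
    then have xneg: "x js = - int n" using js by auto
    have n0: "n > 0" using False xneg by auto
    have js0: "js = 0"
    proof (rule ccontr)
      assume "js \<noteq> 0"
      then have "x 0 < x js" using mono js by auto
      then show False using bnd xneg by fastforce
    qed
    have del: "mat_delete A n 0 = pmat n (\<lambda>j. x (Suc j))"
      unfolding A_def pmat_def mat_delete_def by (rule eq_matI) auto
    have IH: "det (pmat n (\<lambda>j. x (Suc j))) = (-1) ^ (\<Sum>j<n. nat (- x (Suc j)))"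
    proof (rule Suc.IH)
      show "\<forall>j k. j < k \<longrightarrow> k < n \<longrightarrow> x (Suc j) < x (Suc k)" using mono by auto
      show "\<forall>j<n. \<bar>x (Suc j)\<bar> < int n"
      proof (intro allI impI)
        fix j assume "j < n"
        then have "\<bar>x (Suc j)\<bar> \<noteq> int n" using inj_onD[OF inj, of "Suc j" js] js js0 by auto
        moreover have "\<bar>x (Suc j)\<bar> < int (Suc n)" using bnd \<open>j < n\<close> by simp
        ultimately show "\<bar>x (Suc j)\<bar> < int n" by linarith
      qed
      show "inj_on (\<lambda>j. \<bar>x (Suc j)\<bar>) {0..<n}" using inj unfolding inj_on_def by (metis Suc_less_eq atLeastLessThan_iff zero_le old.nat.inject)
    qed
    have s: "(\<Sum>j<Suc n. nat (- x j)) = n + (\<Sum>j<n. nat (- x (Suc j)))"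
      unfolding sum.lessThan_Suc_shift using xneg js0 by simp
    have "det A = (-1)^n * det (pmat n (\<lambda>j. x (Suc j)))" using lap js0 del by (simp add: cofactor_def)
    then show ?thesis using IH s by (simp add: A_def power_add)
  qed
qed

lemma part_mono:
  assumes "is_partition lam" "1 \<le> i" "i \<le> j"
  shows "lam j \<le> lam i"
  using assms(3)
proof (induction j rule: dec_induct)
  case base then show ?case by simp
next
  case (step j)
  then have "lam (Suc j) \<le> lam j" using assms(1,2) unfolding is_partition_def by auto
  then show ?case using step by simp
qed

lemma part_fin: "is_partition lam \<Longrightarrow> finite {i. 1 \<le> i \<and> lam i \<noteq> 0}"
  unfolding is_partition_def by simp

lemma part_zero:
  assumes "is_partition lam" "part_length lam \<le> r" "r < k"
  shows "lam k = 0"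
proof (rule ccontr)
  assume "lam k \<noteq> 0"
  then have "{1..k} \<subseteq> {i. 1 \<le> i \<and> lam i \<noteq> 0}"
  proof -
    assume nz: "lam k \<noteq> 0"
    show ?thesis
    proof
      fix j assume "j \<in> {1..k}"
      then have j: "1 \<le> j" "j \<le> k" by auto
      then have "lam k \<le> lam j" using part_mono[OF assms(1), of j k] by simp
      then show "j \<in> {i. 1 \<le> i \<and> lam i \<noteq> 0}" using j nz by simp
    qed
  qed
  then have "card {1..k} \<le> part_length lam"
    unfolding part_length_def by (rule card_mono[OF part_fin[OF assms(1)]])
  then show False using assms by simp
qed

lemma part_size_eq:
  assumes "is_partition lam" "part_length lam \<le> r"
  shows "part_size lam = (\<Sum>k\<in>{1..r}. lam k)"
  unfolding part_size_def
proof (rule sum.mono_neutral_left)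
  show "{i. 1 \<le> i \<and> lam i \<noteq> 0} \<subseteq> {1..r}"
    using part_zero[OF assms] by (auto simp: not_less[symmetric])
qed auto

lemma frob_rank_iff:
  assumes part: "is_partition lam" and i1: "1 \<le> i"
  shows "i \<le> frob_rank lam \<longleftrightarrow> i \<le> lam i"
proof
  assume a: "i \<le> frob_rank lam"
  show "i \<le> lam i"
  proof (rule ccontr)
    assume ni: "\<not> i \<le> lam i"
    have "{j. 1 \<le> j \<and> j \<le> lam j} \<subseteq> {1..<i}"
    proof
      fix j assume "j \<in> {j. 1 \<le> j \<and> j \<le> lam j}"
      then have j: "1 \<le> j" "j \<le> lam j" by auto
      show "j \<in> {1..<i}"
      proof (rule ccontr)
        assume "j \<notin> {1..<i}"
        then have ij: "i \<le> j" using j by auto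
        then have "lam j \<le> lam i" using part_mono[OF part i1] by simp
        then show False using j ni ij by linarith
      qed
    qed
    then have "frob_rank lam \<le> card {1..<i}" unfolding frob_rank_def by (rule card_mono[rotated]) simp
    then show False using a i1 by simp
  qed
next
  have fin: "finite {j. 1 \<le> j \<and> j \<le> lam j}"
  proof (rule finite_subset[of _ "{..lam 1}"])
    show "{j. 1 \<le> j \<and> j \<le> lam j} \<subseteq> {..lam 1}"
    proof
      fix j assume "j \<in> {j. 1 \<le> j \<and> j \<le> lam j}"
      then have j: "1 \<le> j" "j \<le> lam j" by auto
      then have "lam j \<le> lam 1" using part_mono[OF part, of 1 j] by simp
      then show "j \<in> {..lam 1}" using j by simp
    qed
  qed simp
  assume a: "i \<le> lam i"
  have "{1..i} \<subseteq> {j. 1 \<le> j \<and> j \<le> lam j}"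
  proof
    fix j assume "j \<in> {1..i}"
    then have j: "1 \<le> j" "j \<le> i" by auto
    then have "lam i \<le> lam j" using part_mono[OF part, of j i] by simp
    then show "j \<in> {j. 1 \<le> j \<and> j \<le> lam j}" using j a by simp
  qed
  then have "card {1..i} \<le> frob_rank lam" unfolding frob_rank_def by (rule card_mono[OF fin])
  then show "i \<le> frob_rank lam" by simp
qed

lemma conj_iff:
  assumes part: "is_partition lam" and i1: "1 \<le> i" and k1: "1 \<le> k"
  shows "k \<le> conj_part lam i \<longleftrightarrow> i \<le> lam k"
proof -
  have fin: "finite {j. 1 \<le> j \<and> i \<le> lam j}"
  proof (rule finite_subset[OF _ part_fin[OF part]])
    show "{j. 1 \<le> j \<and> i \<le> lam j} \<subseteq> {i. 1 \<le> i \<and> lam i \<noteq> 0}" using i1 by auto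
  qed
  show ?thesis
  proof
    assume a: "k \<le> conj_part lam i"
    show "i \<le> lam k"
    proof (rule ccontr)
      assume nk: "\<not> i \<le> lam k"
      have "{j. 1 \<le> j \<and> i \<le> lam j} \<subseteq> {1..<k}"
      proof
        fix j assume "j \<in> {j. 1 \<le> j \<and> i \<le> lam j}"
        then have j: "1 \<le> j" "i \<le> lam j" by auto
        show "j \<in> {1..<k}"
        proof (rule ccontr)
          assume "j \<notin> {1..<k}"
          then have kj: "k \<le> j" using j by auto
          then have "lam j \<le> lam k" using part_mono[OF part k1] by simp
          then show False using j nk by linarith
        qed
      qed
      then have "conj_part lam i \<le> card {1..<k}" unfolding conj_part_def by (rule card_mono[rotated]) simp
      then show False using a k1 by simp
    qed
  next
    assume a: "i \<le> lam k"
    have "{1..k} \<subseteq> {j. 1 \<le> j \<and> i \<le> lam j}"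
    proof
      fix j assume "j \<in> {1..k}"
      then have j: "1 \<le> j" "j \<le> k" by auto
      then have "lam k \<le> lam j" using part_mono[OF part, of j k] by simp
      then show "j \<in> {j. 1 \<le> j \<and> i \<le> lam j}" using j a by simp
    qed
    then have "card {1..k} \<le> conj_part lam i" unfolding conj_part_def by (rule card_mono[OF fin])
    then show "k \<le> conj_part lam i" by simp
  qed
qed

lemma inP_iff:
  assumes "is_partition lam" "part_length lam \<le> r"
  shows "in_P r lam \<longleftrightarrow> (\<forall>i\<ge>1. i \<le> lam i \<longrightarrow> i \<le> lam (lam i + 1) \<and> lam (lam i + 2) < i)"
proof -
  have "conj_part lam i = lam i + 1 \<longleftrightarrow> i \<le> lam (lam i + 1) \<and> lam (lam i + 2) < i" if "1 \<le> i" for i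
    using conj_iff[OF assms(1) that, of "lam i + 1"] conj_iff[OF assms(1) that, of "lam i + 2"]
    by auto
  note e = this
  have "in_P r lam \<longleftrightarrow> (\<forall>i. 1 \<le> i \<and> i \<le> lam i \<longrightarrow> conj_part lam i = lam i + 1)"
    using assms frob_rank_iff[OF assms(1)]
    unfolding in_P_def frob_beta_def frob_alpha_def by auto
  also have "\<dots> \<longleftrightarrow> (\<forall>i\<ge>1. i \<le> lam i \<longrightarrow> i \<le> lam (lam i + 1) \<and> lam (lam i + 2) < i)"
    using e by blast
  finally show ?thesis .
qed


lemma y_strict:
  assumes "is_partition lam" "1 \<le> i" "i < k"
  shows "int (lam k) - int k + 1 < int (lam i) - int i + 1"
  using part_mono[OF assms(1,2), of k] assms(3) by simp

lemma K1:
  assumes part: "is_partition lam"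
    and G: "\<forall>i\<ge>1. i \<le> lam i \<longrightarrow> i \<le> lam (lam i + 1) \<and> lam (lam i + 2) < i"
  shows "inj_on (\<lambda>k. \<bar>int (lam k) - int k + 1\<bar>) {1..r}"
proof -
  have noeq: False if ik: "1 \<le> i" "i < k" and eq: "int (lam i) + int (lam k) + 2 = int i + int k" for i k
  proof (cases "i \<le> lam i")
    case True
    with G ik have g: "i \<le> lam (lam i + 1)" "lam (lam i + 2) < i" by auto
    show False
    proof (cases "k \<le> lam i + 1")
      case True
      then have "lam (lam i + 1) \<le> lam k" using part_mono[OF part, of k "lam i + 1"] ik by simp
      then show False using g eq True by linarith
    next
      case False
      then have "lam k \<le> lam (lam i + 2)" using part_mono[OF part, of "lam i + 2" k] by simp
      then show False using g eq False by linarith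
    qed
  next
    case False
    then have "lam k \<le> lam i" using part_mono[OF part, of i k] ik by simp
    then show False using False eq ik by linarith
  qed
  show ?thesis
  proof (rule inj_onI)
    fix a b assume ab: "a \<in> {1..r}" "b \<in> {1..r}"
      and e: "\<bar>int (lam a) - int a + 1\<bar> = \<bar>int (lam b) - int b + 1\<bar>"
    show "a = b"
    proof (rule ccontr)
      assume "a \<noteq> b"
      then consider "a < b" | "b < a" by linarith
      then show False
      proof cases
        case 1
        then have "int (lam b) - int b + 1 < int (lam a) - int a + 1" using y_strict[OF part, of a b] ab by simp
        then have "int (lam a) + int (lam b) + 2 = int a + int b" using e by linarith
        then show False using noeq[of a b] 1 ab by simp
      next
        case 2
        then have "int (lam a) - int a + 1 < int (lam b) - int b + 1" using y_strict[OF part, of b a] ab by simp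
        then have "int (lam b) + int (lam a) + 2 = int b + int a" using e by linarith
        then show False using noeq[of b a] 2 ab by simp
      qed
    qed
  qed
qed

lemma K2:
  assumes part: "is_partition lam" and len: "part_length lam \<le> r" and l1: "lam 1 \<le> r - 1"
    and r1: "1 \<le> r"
    and inj: "inj_on (\<lambda>k. \<bar>int (lam k) - int k + 1\<bar>) {1..r}"
  shows "\<forall>i\<ge>1. i \<le> lam i \<longrightarrow> i \<le> lam (lam i + 1) \<and> lam (lam i + 2) < i"
proof (intro allI impI conjI)
  define y where "y k = int (lam k) - int k + 1" for k
  have inj': "inj_on (\<lambda>k. nat \<bar>y k\<bar>) {1..r}"
  proof (rule inj_onI)
    fix a b assume ab: "a \<in> {1..r}" "b \<in> {1..r}" "nat \<bar>y a\<bar> = nat \<bar>y b\<bar>"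
    then have "\<bar>y a\<bar> = \<bar>y b\<bar>" by simp
    then show "a = b" using inj_onD[OF inj _ ab(1,2)] unfolding y_def by simp
  qed
  have lamle: "lam k \<le> r - 1" if "1 \<le> k" for k using part_mono[OF part, of 1 k] that l1 by simp
  have bnd: "nat \<bar>y k\<bar> < r" if "k \<in> {1..r}" for k using lamle[of k] that r1 unfolding y_def by auto
  have surj: "(\<lambda>k. nat \<bar>y k\<bar>) ` {1..r} = {0..<r}"
  proof (rule card_subset_eq)
    show "(\<lambda>k. nat \<bar>y k\<bar>) ` {1..r} \<subseteq> {0..<r}" using bnd by auto
    show "card ((\<lambda>k. nat \<bar>y k\<bar>) ` {1..r}) = card {0..<r}" using card_image[OF inj'] by simp
  qed simp
  have ystr: "y k < y i" if "1 \<le> i" "i < k" for i k using y_strict[OF part that] unfolding y_def .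
  have ymono: "y k \<le> y i" if "1 \<le> i" "i \<le> k" for i k using ystr[of i k] that by (cases "i = k") auto
  fix i :: nat assume i1: "1 \<le> i" and ii: "i \<le> lam i"
  define m where "m = lam i - i + 1"
  have ym: "y i = int m" using ii unfolding y_def m_def by simp
  have m1: "1 \<le> m" unfolding m_def by simp
  have ir: "i \<le> r" "lam i + 1 \<le> r" using ii lamle[OF i1] r1 by auto
  show "i \<le> lam (lam i + 1)"
  proof (rule ccontr)
    assume "\<not> i \<le> lam (lam i + 1)"
    then have yn: "y (lam i + 1) \<le> - int m" unfolding y_def m_def using ii by simp
    have "{0..<m} \<subseteq> (\<lambda>k. nat \<bar>y k\<bar>) ` {i+1..<lam i + 1}"
    proof
      fix v assume v: "v \<in> {0..<m}"
      then have "v \<in> (\<lambda>k. nat \<bar>y k\<bar>) ` {1..r}" using surj m_def ir by auto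
      then obtain k where k: "k \<in> {1..r}" "v = nat \<bar>y k\<bar>" by auto
      have "i < k"
      proof (rule ccontr)
        assume "\<not> i < k"
        then have "y i \<le> y k" using ymono[of k i] k by simp
        then have "int m \<le> \<bar>y k\<bar>" using ym by arith
        then show False using v k(2) by simp
      qed
      moreover have "k < lam i + 1"
      proof (rule ccontr)
        assume "\<not> k < lam i + 1"
        then have "y k \<le> y (lam i + 1)" using ymono[of "lam i + 1" k] by simp
        then have "int m \<le> \<bar>y k\<bar>" using yn by arith
        then show False using v k(2) by simp
      qed
      ultimately have "k \<in> {i+1..<lam i + 1}" by simp
      then show "v \<in> (\<lambda>k. nat \<bar>y k\<bar>) ` {i+1..<lam i + 1}" using k(2) by (rule rev_image_eqI)
    qed
    then have "card {0..<m} \<le> card ((\<lambda>k. nat \<bar>y k\<bar>) ` {i+1..<lam i + 1})"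
      by (rule card_mono[rotated]) simp
    also have "\<dots> \<le> card {i+1..<lam i + 1}" by (rule card_image_le) simp
    finally show False unfolding m_def using ii by simp
  qed
  show "lam (lam i + 2) < i"
  proof (cases "lam i + 2 \<le> r")
    case False
    then have "lam (lam i + 2) = 0" using part_zero[OF part len] by simp
    then show ?thesis using i1 by simp
  next
    case True
    show ?thesis
    proof (rule ccontr)
      assume "\<not> lam (lam i + 2) < i"
      then have yn: "- int m \<le> y (lam i + 2)" unfolding y_def m_def using ii by simp
      have maps: "(\<lambda>k. nat \<bar>y k\<bar>) ` {i+1..lam i + 2} \<subseteq> {0..<m}"
      proof
        fix v assume "v \<in> (\<lambda>k. nat \<bar>y k\<bar>) ` {i+1..lam i + 2}"
        then obtain k where k0: "k \<in> {i+1..lam i + 2}" "v = nat \<bar>y k\<bar>" by blast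
        then have k: "i < k" "k \<le> lam i + 2" "v = nat \<bar>y k\<bar>" by auto
        have "y k < y i" by (rule ystr) (use k i1 in auto)
        moreover have "y (lam i + 2) \<le> y k" by (rule ymono) (use k i1 in auto)
        moreover have "\<bar>y k\<bar> \<noteq> \<bar>y i\<bar>"
        proof
          assume "\<bar>y k\<bar> = \<bar>y i\<bar>"
          then have "nat \<bar>y k\<bar> = nat \<bar>y i\<bar>" by simp
          moreover have "k \<in> {1..r}" "i \<in> {1..r}" using k i1 ir True by auto
          ultimately have "k = i" by (rule inj_onD[OF inj'])
          then show False using k by simp
        qed
        ultimately have "\<bar>y k\<bar> < int m" using ym yn by arith
        then show "v \<in> {0..<m}" using k(3) by simp
      qed
      have "inj_on (\<lambda>k. nat \<bar>y k\<bar>) {i+1..lam i + 2}"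
        by (rule inj_on_subset[OF inj']) (use i1 True in auto)
      then have "card {i+1..lam i + 2} \<le> card {0..<m}"
        using card_inj_on_le[OF _ maps] by simp
      then show False unfolding m_def using ii by simp
    qed
  qed
qed


lemma minus_one_pow_eq:
  assumes "even (a + b)"
  shows "(-1::int) ^ a = (-1) ^ b"
  using assms by (auto simp: minus_one_power_iff)

lemma gauss2: "2 * (\<Sum>v<r. int v) = int r * (int r - 1)"
  by (induction r) (auto simp: algebra_simps)

lemma img_rev: "(\<lambda>j. r - j) ` {..<r} = {1..(r::nat)}"
proof
  show "(\<lambda>j. r - j) ` {..<r} \<subseteq> {1..r}" by auto
  show "{1..r} \<subseteq> (\<lambda>j. r - j) ` {..<r}"
  proof
    fix k assume k: "k \<in> {1..r}"
    then show "k \<in> (\<lambda>j. r - j) ` {..<r}" by (intro image_eqI[where x="r - k"]) auto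
  qed
qed

lemma inj_rev: "inj_on (\<lambda>j. r - j) {..<(r::nat)}"
  by (rule inj_onI) auto

theorem mainTheorem4:
  fixes r :: nat and lam :: "nat \<Rightarrow> nat"
  assumes "r \<ge> 1"
    and "is_partition lam"
    and "part_length lam \<le> r"
    and "lam 1 \<le> r - 1"
  shows "det (Delta_I r lam) =
    (if in_P r lam then (-1) ^ (r * (r - 1) div 2 + part_size lam div 2) else 0)"
proof -
  note r1 = assms(1) and part = assms(2) and len = assms(3) and l1 = assms(4)
  define x where "x j = int (lam (r - j) + j) - int (r - 1)" for j
  define y where "y k = int (lam k) - int k + 1" for k
  have lamle: "lam k \<le> r - 1" if "1 \<le> k" for k using part_mono[OF part, of 1 k] that l1 by simp
  have xy: "x j = y (r - j)" if "j < r" for j using that r1 unfolding x_def y_def by auto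
  have Idx: "I_idx r lam j < 2 * r - 1" if "j < r" for j
  proof -
    have "lam (r - j) \<le> r - 1" using lamle[of "r - j"] that by simp
    then show ?thesis using that r1 unfolding I_idx_def by arith
  qed
  have DP: "Delta_I r lam = pmat r x"
  proof (rule eq_matI)
    fix i j assume ij: "i < dim_row (pmat r x)" "j < dim_col (pmat r x)"
    then have i: "i < r" and j: "j < r" by (auto simp: pmat_def)
    have "Delta_I r lam $$ (i, j) = D_mat r $$ (i, I_idx r lam j)"
      unfolding Delta_I_def using i j by simp
    also have "\<dots> = (if I_idx r lam j = r - (i + 1) \<or> I_idx r lam j = r + (i + 1) - 2 then 1 else 0)"
      unfolding D_mat_def using i Idx[OF j] by (simp add: Let_def)
    also have "\<dots> = (if int i = \<bar>x j\<bar> then 1 else 0)"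
    proof -
      have "(I_idx r lam j = r - (i + 1) \<or> I_idx r lam j = r + (i + 1) - 2) \<longleftrightarrow> int i = \<bar>x j\<bar>"
        unfolding x_def I_idx_def using i r1 by auto
      then show ?thesis by simp
    qed
    also have "\<dots> = pmat r x $$ (i, j)" unfolding pmat_def using i j by simp
    finally show "Delta_I r lam $$ (i, j) = pmat r x $$ (i, j)" .
  qed (auto simp: Delta_I_def pmat_def)
  have xmono: "\<forall>j k. j < k \<longrightarrow> k < r \<longrightarrow> x j < x k"
  proof (intro allI impI)
    fix j k assume jk: "j < k" "k < r"
    then have "lam (r - j) \<le> lam (r - k)" using part_mono[OF part, of "r - k" "r - j"] by simp
    then show "x j < x k" unfolding x_def using jk by simp
  qed
  have xbnd: "\<forall>j<r. \<bar>x j\<bar> < int r"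
  proof (intro allI impI)
    fix j assume j: "j < r"
    then have "lam (r - j) \<le> r - 1" using lamle[of "r - j"] by simp
    then show "\<bar>x j\<bar> < int r" unfolding x_def using j r1 by auto
  qed
  have injeq: "inj_on (\<lambda>j. \<bar>x j\<bar>) {0..<r} \<longleftrightarrow> inj_on (\<lambda>k. \<bar>y k\<bar>) {1..r}"
  proof -
    have "inj_on (\<lambda>j. \<bar>x j\<bar>) {0..<r} \<longleftrightarrow> inj_on ((\<lambda>k. \<bar>y k\<bar>) \<circ> (\<lambda>j. r - j)) {..<r}"
      unfolding atLeast0LessThan by (rule inj_on_cong) (auto simp: xy)
    also have "\<dots> \<longleftrightarrow> inj_on (\<lambda>k. \<bar>y k\<bar>) ((\<lambda>j. r - j) ` {..<r})"
      by (rule comp_inj_on_iff[OF inj_rev, symmetric])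
    finally show ?thesis by (simp add: img_rev)
  qed
  have Piff: "in_P r lam \<longleftrightarrow> inj_on (\<lambda>j. \<bar>x j\<bar>) {0..<r}"
    unfolding inP_iff[OF part len] injeq y_def
    using K1[OF part] K2[OF part len l1 r1] by blast
  show ?thesis
  proof (cases "inj_on (\<lambda>j. \<bar>x j\<bar>) {0..<r}")
    case False
    then obtain a b where ab: "a < r" "b < r" "a \<noteq> b" "\<bar>x a\<bar> = \<bar>x b\<bar>"
      unfolding inj_on_def by auto
    have "col (pmat r x) a = col (pmat r x) b"
      by (rule eq_vecI) (auto simp: pmat_def ab)
    then have "det (pmat r x) = 0"
      by (intro det_identical_columns[of _ r a b]) (auto simp: pmat_def ab)
    then show ?thesis using False Piff DP by simp
  next
    case True
    define N where "N = (\<Sum>j<r. nat (- x j))"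
    have d: "det (Delta_I r lam) = (-1) ^ N" unfolding DP N_def by (rule L1[OF xmono xbnd True])
    have inj2: "inj_on (\<lambda>j. nat \<bar>x j\<bar>) {..<r}"
      using True unfolding inj_on_def by (metis atLeast0LessThan nat_abs_int_diff nat_int abs_ge_zero int_nat_eq eq_nat_nat_iff)
    have img: "(\<lambda>j. nat \<bar>x j\<bar>) ` {..<r} = {..<r}"
    proof (rule card_subset_eq)
      show "(\<lambda>j. nat \<bar>x j\<bar>) ` {..<r} \<subseteq> {..<r}" using xbnd by auto
      show "card ((\<lambda>j. nat \<bar>x j\<bar>) ` {..<r}) = card {..<r}" using card_image[OF inj2] by simp
    qed simp
    have E1: "(\<Sum>j<r. int (nat \<bar>x j\<bar>)) = (\<Sum>v<r. int v)"
      using sum.reindex[OF inj2, of int] img by simp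
    have E1': "(\<Sum>j<r. \<bar>x j\<bar>) = (\<Sum>v<r. int v)" using E1 by simp
    have E3a: "(\<Sum>j<r. int (lam (r - j))) = (\<Sum>k\<in>{1..r}. int (lam k))"
      using sum.reindex[OF inj_rev, of "\<lambda>k. int (lam k)"] img_rev by (simp add: comp_def)
    have E3: "(\<Sum>j<r. x j) = (\<Sum>j<r. int (lam (r - j))) + (\<Sum>j<r. int j) - int r * int (r - 1)"
      unfolding x_def using r1 by (simp add: sum.distrib sum_subtractf of_nat_diff)
    have E4: "(\<Sum>j<r. \<bar>x j\<bar>) = (\<Sum>j<r. x j) + 2 * int N"
    proof -
      have "(\<Sum>j<r. \<bar>x j\<bar>) = (\<Sum>j<r. x j + 2 * int (nat (- x j)))"
        by (rule sum.cong) auto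
      also have "\<dots> = (\<Sum>j<r. x j) + 2 * int N"
        unfolding N_def by (simp add: sum.distrib sum_distrib_left)
      finally show ?thesis .
    qed
    have PS: "int (part_size lam) = (\<Sum>k\<in>{1..r}. int (lam k))"
      using part_size_eq[OF part len] by simp
    have G: "2 * (\<Sum>v<r. int v) = int r * (int r - 1)" by (rule gauss2)
    have r1': "int (r - 1) = int r - 1" using r1 by simp
    have key: "int (r * (r - 1)) = int (part_size lam) + 2 * int N"
      using E1' E3a E3 E4 PS G r1' by (simp add: algebra_simps) 
    then have key': "r * (r - 1) = part_size lam + 2 * N" by linarith
    have ev: "even (r * (r - 1))" by (cases "even r") auto
    have "even ((r * (r - 1) div 2 + part_size lam div 2) + N)"
    proof -
      obtain a where a: "r * (r - 1) = 2 * a" using ev by blast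
      then have "part_size lam = 2 * (a - N)" "N \<le> a" using key' by auto
      then have "r * (r - 1) div 2 + part_size lam div 2 + N = 2 * a" using a by simp
      then show ?thesis by simp
    qed
    then have "(-1::int) ^ (r * (r - 1) div 2 + part_size lam div 2) = (-1) ^ N"
      by (rule minus_one_pow_eq)
    then show ?thesis using d True Piff by simp
  qed
qed

end
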